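(* Let $N\geq 2$, $k\geq 1$ be integers, $s\in\left(-\frac{1}{N-1},1\right)$, and let $\Gamma(N,k)$ be the $N^k\times N^k$ matrix with rows and columns indexed by functions $\sigma,\tau:\{1,\dots,k\}\to\{1,\dots,N\}$ and entries $\Gamma(N,k)_{\sigma\tau}=s^{|\{t:\sigma(t)\neq\tau(t)\}|}$ (the Gram matrix of the states $|\psi_{\sigma(1)}\rangle\otimes\cdots\otimes|\psi_{\sigma(k)}\rangle$ where $|\psi_1\rangle,\dots,|\psi_N\rangle$ are unit vectors with pairwise inner products $s$). Then there exists an $N^k\times N^k$ positive semidefinite matrix $Z(N,k)$, all of whose diagonal entries equal $1/N^k$, such that $$\operatorname{tr}\left[\Gamma(N,k)Z(N,k)\right]=\begin{cases}(1-s)^k, & s\in[0,1),\\ \left[1+(N-1)s\right]^k, & s\in\left(-\frac{1}{N-1},0\right].\end{cases}$$ *)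

theory Defs
  imports Complex_Main "HOL-Library.FuncSet"
begin

text \<open>Index set: functions sigma from {0..<k} to {0..<N} (0-based version of
  {1..k} -> {1..N}), extensional outside {0..<k}.\<close>
definition idx :: "nat \<Rightarrow> nat \<Rightarrow> (nat \<Rightarrow> nat) set" where
  "idx N k = ({0..<k} \<rightarrow>\<^sub>E {0..<N})"

definition hamming :: "nat \<Rightarrow> (nat \<Rightarrow> nat) \<Rightarrow> (nat \<Rightarrow> nat) \<Rightarrow> nat" where
  "hamming k \<sigma> \<tau> = card {t \<in> {0..<k}. \<sigma> t \<noteq> \<tau> t}"

definition Gamma :: "real \<Rightarrow> nat \<Rightarrow> (nat \<Rightarrow> nat) \<Rightarrow> (nat \<Rightarrow> nat) \<Rightarrow> complex" where
  "Gamma s k \<sigma> \<tau> = complex_of_real (s ^ hamming k \<sigma> \<tau>)"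

definition psd_on :: "'i set \<Rightarrow> ('i \<Rightarrow> 'i \<Rightarrow> complex) \<Rightarrow> bool" where
  "psd_on I Z \<longleftrightarrow>
     (\<forall>\<sigma>\<in>I. \<forall>\<tau>\<in>I. Z \<tau> \<sigma> = cnj (Z \<sigma> \<tau>)) \<and>
     (\<forall>x :: 'i \<Rightarrow> complex.
        Im (\<Sum>\<sigma>\<in>I. \<Sum>\<tau>\<in>I. cnj (x \<sigma>) * Z \<sigma> \<tau> * x \<tau>) = 0 \<and>
        Re (\<Sum>\<sigma>\<in>I. \<Sum>\<tau>\<in>I. cnj (x \<sigma>) * Z \<sigma> \<tau> * x \<tau>) \<ge> 0)"

definition trace_prod :: "'i set \<Rightarrow> ('i \<Rightarrow> 'i \<Rightarrow> complex) \<Rightarrow> ('i \<Rightarrow> 'i \<Rightarrow> complex) \<Rightarrow> complex" where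
  "trace_prod I A B = (\<Sum>\<sigma>\<in>I. \<Sum>\<tau>\<in>I. A \<sigma> \<tau> * B \<tau> \<sigma>)"

end

theory Submission
  imports Defs
begin

lemma ham_pow:
  fixes x :: real
  shows "x ^ hamming k \<sigma> \<tau> = (\<Prod>t\<in>{0..<k}. if \<sigma> t = \<tau> t then 1 else x)"
proof -
  have "(\<Prod>t\<in>{0..<k}. if \<sigma> t = \<tau> t then 1 else x)
      = (\<Prod>t\<in>{t \<in> {0..<k}. \<sigma> t \<noteq> \<tau> t}. x)"
    by (rule prod.mono_neutral_cong_right) auto
  then show ?thesis by (simp add: hamming_def)
qed

lemma ham_sym: "hamming k \<sigma> \<tau> = hamming k \<tau> \<sigma>"
  unfolding hamming_def by (metis (mono_tags))

lemma ham_refl: "hamming k \<sigma> \<sigma> = 0"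
  unfolding hamming_def by simp

lemma finite_idx: "finite (idx N k)"
  unfolding idx_def by (simp add: finite_PiE)

lemma card_idx: "card (idx N k) = N ^ k"
  unfolding idx_def by (simp add: card_funcsetE)

lemma sum_ham:
  fixes x :: real
  assumes "\<sigma> \<in> idx N k"
  shows "(\<Sum>\<tau>\<in>idx N k. x ^ hamming k \<sigma> \<tau>) = (1 + (real N - 1) * x) ^ k"
proof -
  have s: "(\<Sum>a\<in>{0..<N}. if \<sigma> t = a then 1 else x) = 1 + (real N - 1) * x"
    if "t \<in> {0..<k}" for t
  proof -
    have st: "\<sigma> t \<in> {0..<N}" using assms that unfolding idx_def by auto
    have "(\<Sum>a\<in>{0..<N}. if \<sigma> t = a then 1 else x)
        = (\<Sum>a\<in>{0..<N}. x + (if \<sigma> t = a then 1 - x else 0))"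
      by (rule sum.cong) auto
    also have "\<dots> = real N * x + (1 - x)"
      using st by (simp add: sum.distrib)
    finally show ?thesis by (simp add: algebra_simps)
  qed
  have "(\<Sum>\<tau>\<in>idx N k. x ^ hamming k \<sigma> \<tau>)
      = (\<Sum>\<tau>\<in>idx N k. \<Prod>t\<in>{0..<k}. if \<sigma> t = \<tau> t then 1 else x)"
    by (simp add: ham_pow)
  also have "\<dots> = (\<Prod>t\<in>{0..<k}. \<Sum>a\<in>{0..<N}. if \<sigma> t = a then 1 else x)"
    unfolding idx_def by (rule prod_sum_PiE[symmetric]) auto
  also have "\<dots> = (\<Prod>t\<in>{0..<k}. 1 + (real N - 1) * x)"
    by (rule prod.cong) (auto simp: s)
  finally show ?thesis by simp
qed

lemma psd_gram:
  fixes V :: "'r \<Rightarrow> 'i \<Rightarrow> real"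
  assumes "finite R" "finite I"
    and Z: "\<And>\<sigma> \<tau>. \<sigma> \<in> I \<Longrightarrow> \<tau> \<in> I \<Longrightarrow> Z \<sigma> \<tau> = complex_of_real (\<Sum>\<rho>\<in>R. V \<rho> \<sigma> * V \<rho> \<tau>)"
  shows "psd_on I Z"
  unfolding psd_on_def
proof (intro conjI ballI allI)
  fix \<sigma> \<tau> assume "\<sigma> \<in> I" "\<tau> \<in> I"
  then show "Z \<tau> \<sigma> = cnj (Z \<sigma> \<tau>)" by (simp add: Z mult.commute)
next
  fix x :: "'i \<Rightarrow> complex"
  define y where "y \<rho> = (\<Sum>\<tau>\<in>I. complex_of_real (V \<rho> \<tau>) * x \<tau>)" for \<rho>
  have "(\<Sum>\<sigma>\<in>I. \<Sum>\<tau>\<in>I. cnj (x \<sigma>) * Z \<sigma> \<tau> * x \<tau>)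
     = (\<Sum>\<sigma>\<in>I. \<Sum>\<tau>\<in>I. \<Sum>\<rho>\<in>R. (complex_of_real (V \<rho> \<sigma>) * cnj (x \<sigma>)) * (complex_of_real (V \<rho> \<tau>) * x \<tau>))"
    by (intro sum.cong refl) (simp add: Z sum_distrib_left sum_distrib_right mult_ac)
  also have "\<dots> = (\<Sum>\<rho>\<in>R. (\<Sum>\<sigma>\<in>I. complex_of_real (V \<rho> \<sigma>) * cnj (x \<sigma>)) * (\<Sum>\<tau>\<in>I. complex_of_real (V \<rho> \<tau>) * x \<tau>))"
  proof -
    have "(\<Sum>\<sigma>\<in>I. \<Sum>\<tau>\<in>I. \<Sum>\<rho>\<in>R. (complex_of_real (V \<rho> \<sigma>) * cnj (x \<sigma>)) * (complex_of_real (V \<rho> \<tau>) * x \<tau>))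
       = (\<Sum>\<sigma>\<in>I. \<Sum>\<rho>\<in>R. \<Sum>\<tau>\<in>I. (complex_of_real (V \<rho> \<sigma>) * cnj (x \<sigma>)) * (complex_of_real (V \<rho> \<tau>) * x \<tau>))"
      by (intro sum.cong refl) (rule sum.swap)
    also have "\<dots> = (\<Sum>\<rho>\<in>R. \<Sum>\<sigma>\<in>I. \<Sum>\<tau>\<in>I. (complex_of_real (V \<rho> \<sigma>) * cnj (x \<sigma>)) * (complex_of_real (V \<rho> \<tau>) * x \<tau>))"
      by (rule sum.swap)
    finally show ?thesis by (simp only: sum_product)
  qed
  also have "\<dots> = (\<Sum>\<rho>\<in>R. cnj (y \<rho>) * y \<rho>)"
    by (simp add: y_def)
  also have "\<dots> = complex_of_real (\<Sum>\<rho>\<in>R. Re (y \<rho>) ^ 2 + Im (y \<rho>) ^ 2)"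
    by (simp add: complex_mult_cnj mult.commute)
  finally have e: "(\<Sum>\<sigma>\<in>I. \<Sum>\<tau>\<in>I. cnj (x \<sigma>) * Z \<sigma> \<tau> * x \<tau>) = complex_of_real (\<Sum>\<rho>\<in>R. Re (y \<rho>) ^ 2 + Im (y \<rho>) ^ 2)" .
  show "Im (\<Sum>\<sigma>\<in>I. \<Sum>\<tau>\<in>I. cnj (x \<sigma>) * Z \<sigma> \<tau> * x \<tau>) = 0"
    unfolding e by simp
  show "Re (\<Sum>\<sigma>\<in>I. \<Sum>\<tau>\<in>I. cnj (x \<sigma>) * Z \<sigma> \<tau> * x \<tau>) \<ge> 0"
    unfolding e by (simp add: sum_nonneg)
qed

definition wv :: "nat \<Rightarrow> nat \<Rightarrow> nat \<Rightarrow> real" where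
  "wv N a b = (if a = b then 1 else 0) - 1 / real N"

lemma inner_w:
  assumes "N \<ge> 2" "b < N" "b' < N"
  shows "(\<Sum>a\<in>{0..<N}. wv N a b * wv N a b' / (real N - 1))
     = (if b = b' then 1 else - 1 / (real N - 1)) / real N"
proof -
  have "(\<Sum>a\<in>{0..<N}. wv N a b * wv N a b')
     = (\<Sum>a\<in>{0..<N}. (if a = b \<and> a = b' then 1 else 0) - (if a = b then 1 / real N else 0)
          - (if a = b' then 1 / real N else 0) + 1 / real N ^ 2)"
    by (rule sum.cong) (auto simp: wv_def power2_eq_square algebra_simps)
  also have "\<dots> = (if b = b' then 1 else 0) - 1 / real N - 1 / real N + real N / real N ^ 2"
  proof -
    have h: "(\<Sum>a\<in>{0..<N}. if a = b \<and> a = b' then 1 else 0 :: real) = (if b = b' then 1 else 0)"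
    proof (cases "b = b'")
      case False
      then show ?thesis by (intro trans[OF sum.neutral]) auto
    qed (use assms in simp)
    show ?thesis using assms by (simp add: sum.distrib sum_subtractf h)
  qed
  also have "\<dots> = (if b = b' then 1 else 0) - 1 / real N"
    using assms by (simp add: power2_eq_square field_simps)
  finally have e: "(\<Sum>a\<in>{0..<N}. wv N a b * wv N a b') = (if b = b' then 1 else 0) - 1 / real N" .
  have "(\<Sum>a\<in>{0..<N}. wv N a b * wv N a b' / (real N - 1))
      = (\<Sum>a\<in>{0..<N}. wv N a b * wv N a b') / (real N - 1)"
    by (simp add: sum_divide_distrib)
  also have "\<dots> = (if b = b' then 1 else - 1 / (real N - 1)) / real N"
    unfolding e using assms by (auto simp: field_simps)
  finally show ?thesis .
qed

lemma gram_neg: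
  assumes "N \<ge> 2" "\<sigma> \<in> idx N k" "\<tau> \<in> idx N k"
  shows "(\<Sum>\<rho>\<in>idx N k. (\<Prod>t\<in>{0..<k}. wv N (\<rho> t) (\<sigma> t) / sqrt (real N - 1))
             * (\<Prod>t\<in>{0..<k}. wv N (\<rho> t) (\<tau> t) / sqrt (real N - 1)))
       = (- 1 / (real N - 1)) ^ hamming k \<sigma> \<tau> / real N ^ k"
proof -
  have sq: "sqrt (real N - 1) * sqrt (real N - 1) = real N - 1"
    using assms by simp
  have "(\<Sum>\<rho>\<in>idx N k. (\<Prod>t\<in>{0..<k}. wv N (\<rho> t) (\<sigma> t) / sqrt (real N - 1))
             * (\<Prod>t\<in>{0..<k}. wv N (\<rho> t) (\<tau> t) / sqrt (real N - 1)))
      = (\<Sum>\<rho>\<in>idx N k. \<Prod>t\<in>{0..<k}. wv N (\<rho> t) (\<sigma> t) * wv N (\<rho> t) (\<tau> t) / (real N - 1))"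
  proof (intro sum.cong refl)
    fix \<rho>
    have e: "u / sqrt (real N - 1) * (v / sqrt (real N - 1)) = u * v / (real N - 1)" for u v
      using assms(1) by (simp add: sq)
    show "(\<Prod>t\<in>{0..<k}. wv N (\<rho> t) (\<sigma> t) / sqrt (real N - 1))
             * (\<Prod>t\<in>{0..<k}. wv N (\<rho> t) (\<tau> t) / sqrt (real N - 1))
       = (\<Prod>t\<in>{0..<k}. wv N (\<rho> t) (\<sigma> t) * wv N (\<rho> t) (\<tau> t) / (real N - 1))"
      by (simp only: prod.distrib[symmetric] e)
  qed
  also have "\<dots> = (\<Prod>t\<in>{0..<k}. \<Sum>a\<in>{0..<N}. wv N a (\<sigma> t) * wv N a (\<tau> t) / (real N - 1))"
    unfolding idx_def by (rule prod_sum_PiE[symmetric]) auto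
  also have "\<dots> = (\<Prod>t\<in>{0..<k}. (if \<sigma> t = \<tau> t then 1 else - 1 / (real N - 1)) / real N)"
    using assms unfolding idx_def by (intro prod.cong refl inner_w) auto
  also have "\<dots> = (- 1 / (real N - 1)) ^ hamming k \<sigma> \<tau> / real N ^ k"
    by (simp only: prod_dividef ham_pow prod_constant card_atLeastLessThan diff_zero)
  finally show ?thesis .
qed

theorem theorem4:
  fixes N k :: nat and s :: real
  assumes "N \<ge> 2" and "k \<ge> 1"
    and "- 1 / (real N - 1) < s" and "s < 1"
  shows "\<exists>Z :: (nat \<Rightarrow> nat) \<Rightarrow> (nat \<Rightarrow> nat) \<Rightarrow> complex.
           psd_on (idx N k) Z \<and>
           (\<forall>\<sigma>\<in>idx N k. Z \<sigma> \<sigma> = complex_of_real (1 / real N ^ k)) \<and>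
           trace_prod (idx N k) (Gamma s k) Z =
             complex_of_real (if 0 \<le> s then (1 - s) ^ k else (1 + (real N - 1) * s) ^ k)"
proof -
  define c :: real where "c = (if 0 \<le> s then - 1 / (real N - 1) else 1)"
  define Z where "Z \<sigma> \<tau> = complex_of_real (c ^ hamming k \<sigma> \<tau> / real N ^ k)" for \<sigma> \<tau>
  have psd: "psd_on (idx N k) Z"
  proof (cases "0 \<le> s")
    case True
    show ?thesis
      by (rule psd_gram[where R = "idx N k" and
            V = "\<lambda>\<rho> \<sigma>. \<Prod>t\<in>{0..<k}. wv N (\<rho> t) (\<sigma> t) / sqrt (real N - 1)"])
         (use True assms(1) in \<open>auto simp: finite_idx Z_def c_def gram_neg\<close>)
  next
    case False
    have "sqrt (real N ^ k) * sqrt (real N ^ k) = real N ^ k" by simp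
    then show ?thesis
      by (intro psd_gram[where R = "{0::nat}" and V = "\<lambda>_ _. 1 / sqrt (real N ^ k)"])
         (use False in \<open>auto simp: finite_idx Z_def c_def\<close>)
  qed
  have diag: "\<forall>\<sigma>\<in>idx N k. Z \<sigma> \<sigma> = complex_of_real (1 / real N ^ k)"
    by (simp add: Z_def ham_refl)
  have "trace_prod (idx N k) (Gamma s k) Z
      = complex_of_real (\<Sum>\<sigma>\<in>idx N k. (\<Sum>\<tau>\<in>idx N k. (s * c) ^ hamming k \<sigma> \<tau>) / real N ^ k)"
    unfolding trace_prod_def Gamma_def Z_def
    by (simp add: ham_sym[of k _ \<sigma> for \<sigma>] power_mult_distrib sum_divide_distrib)
  also have "\<dots> = complex_of_real (\<Sum>\<sigma>\<in>idx N k. (1 + (real N - 1) * (s * c)) ^ k / real N ^ k)"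
    by (simp add: sum_ham)
  also have "\<dots> = complex_of_real ((1 + (real N - 1) * (s * c)) ^ k)"
    using assms(1) by (simp add: card_idx)
  also have "\<dots> = complex_of_real (if 0 \<le> s then (1 - s) ^ k else (1 + (real N - 1) * s) ^ k)"
  proof -
    have "1 + (real N - 1) * (s * c) = (if 0 \<le> s then 1 - s else 1 + (real N - 1) * s)"
      using assms(1) by (auto simp: c_def)
    then show ?thesis by simp
  qed
  finally show ?thesis using psd diag by blast
qed

end
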